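(* No $\ge 2$-subdivision of $K_4$ is a restricted frame graph.
   Context: A $\ge 2$-subdivision of $K_4$ is a graph obtained from $K_4$ by replacing every edge by a path with at least $3$ edges. A frame is the boundary of an axis-parallel box $I\times J\subset\mathbb R^2$. A graph $G$ is a restricted frame graph if there is a family of frames $\{F_v : v\in V(G)\}$ with $uv\in E(G)$ iff $F_u\cap F_v\neq\emptyset$, satisfying: (1) corners of a frame do not coincide with any point of another frame; (2) the left side of any frame does not intersect any other frame; (3) if the right side of a frame intersects a second frame, this right side intersects both the top and the bottom side of the second frame; (4) if two frames have non-empty intersection, then no frame is entirely contained in the intersection of the two regions bounded by these two frames. *)

theory Defs
  imports Complex_Main
begin

definition inner :: "'a list \<Rightarrow> 'a list" where
  "inner p = butlast (tl p)"

text \<open>(V,E) is (isomorphic to) a graph obtained from K4 by replacing each of its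
six edges by a path with at least 3 edges: there are 4 distinct branch vertices
b 0,...,b 3 and for each pair i<j a path P i j from b i to b j with at least
3 edges (at least 4 vertices); interior vertices of different paths are disjoint
and avoid the branch vertices; V consists exactly of the vertices on these paths
and E consists exactly of the consecutive pairs on these paths.\<close>
definition ge2_subdivision_K4 :: "'a set \<Rightarrow> ('a \<Rightarrow> 'a \<Rightarrow> bool) \<Rightarrow> bool" where
  "ge2_subdivision_K4 V E \<longleftrightarrow>
    (\<exists>(b :: nat \<Rightarrow> 'a) (P :: nat \<Rightarrow> nat \<Rightarrow> 'a list).
       inj_on b {0..<4} \<and>
       (\<forall>i j. i < j \<and> j < 4 \<longrightarrow>
          distinct (P i j) \<and> length (P i j) \<ge> 4 \<and>
          hd (P i j) = b i \<and> last (P i j) = b j \<and>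
          set (inner (P i j)) \<inter> b ` {0..<4} = {}) \<and>
       (\<forall>i j k l. i < j \<and> j < 4 \<and> k < l \<and> l < 4 \<and> (i, j) \<noteq> (k, l) \<longrightarrow>
          set (inner (P i j)) \<inter> set (inner (P k l)) = {}) \<and>
       V = (\<Union>i\<in>{0..<4}. \<Union>j\<in>{i<..<4}. set (P i j)) \<and>
       (\<forall>u v. E u v \<longleftrightarrow>
          (\<exists>i j n. i < j \<and> j < 4 \<and> Suc n < length (P i j) \<and>
             ((u = P i j ! n \<and> v = P i j ! Suc n) \<or> (v = P i j ! n \<and> u = P i j ! Suc n)))))"

text \<open>A box is encoded as (x1, x2, y1, y2) meaning [x1,x2] \<times> [y1,y2] with x1 < x2
and y1 < y2; the frame is its boundary.\<close>
type_synonym box = "real \<times> real \<times> real \<times> real"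

definition valid_box :: "box \<Rightarrow> bool" where
  "valid_box B = (case B of (x1, x2, y1, y2) \<Rightarrow> x1 < x2 \<and> y1 < y2)"

definition region :: "box \<Rightarrow> (real \<times> real) set" where
  "region B = (case B of (x1, x2, y1, y2) \<Rightarrow> {x1..x2} \<times> {y1..y2})"

definition left_side :: "box \<Rightarrow> (real \<times> real) set" where
  "left_side B = (case B of (x1, x2, y1, y2) \<Rightarrow> {x1} \<times> {y1..y2})"

definition right_side :: "box \<Rightarrow> (real \<times> real) set" where
  "right_side B = (case B of (x1, x2, y1, y2) \<Rightarrow> {x2} \<times> {y1..y2})"

definition bottom_side :: "box \<Rightarrow> (real \<times> real) set" where
  "bottom_side B = (case B of (x1, x2, y1, y2) \<Rightarrow> {x1..x2} \<times> {y1})"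

definition top_side :: "box \<Rightarrow> (real \<times> real) set" where
  "top_side B = (case B of (x1, x2, y1, y2) \<Rightarrow> {x1..x2} \<times> {y2})"

definition frame :: "box \<Rightarrow> (real \<times> real) set" where
  "frame B = left_side B \<union> right_side B \<union> bottom_side B \<union> top_side B"

definition corners :: "box \<Rightarrow> (real \<times> real) set" where
  "corners B = (case B of (x1, x2, y1, y2) \<Rightarrow> {(x1, y1), (x1, y2), (x2, y1), (x2, y2)})"

definition restricted_frame_graph :: "'a set \<Rightarrow> ('a \<Rightarrow> 'a \<Rightarrow> bool) \<Rightarrow> bool" where
  "restricted_frame_graph V E \<longleftrightarrow>
    (\<exists>F :: 'a \<Rightarrow> box.
       (\<forall>v\<in>V. valid_box (F v)) \<and>
       (\<forall>u\<in>V. \<forall>v\<in>V. u \<noteq> v \<longrightarrow> (E u v \<longleftrightarrow> frame (F u) \<inter> frame (F v) \<noteq> {})) \<and>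
       \<comment> \<open>(1) corners of a frame avoid every other frame\<close>
       (\<forall>u\<in>V. \<forall>v\<in>V. u \<noteq> v \<longrightarrow> corners (F u) \<inter> frame (F v) = {}) \<and>
       \<comment> \<open>(2) left sides avoid every other frame\<close>
       (\<forall>u\<in>V. \<forall>v\<in>V. u \<noteq> v \<longrightarrow> left_side (F u) \<inter> frame (F v) = {}) \<and>
       \<comment> \<open>(3) a right side meeting another frame meets both its top and bottom side\<close>
       (\<forall>u\<in>V. \<forall>v\<in>V. u \<noteq> v \<longrightarrow> right_side (F u) \<inter> frame (F v) \<noteq> {} \<longrightarrow>
           right_side (F u) \<inter> top_side (F v) \<noteq> {} \<and>
           right_side (F u) \<inter> bottom_side (F v) \<noteq> {}) \<and>
       \<comment> \<open>(4) no frame inside the intersection of the regions of two intersecting frames\<close>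
       (\<forall>u\<in>V. \<forall>v\<in>V. u \<noteq> v \<longrightarrow> frame (F u) \<inter> frame (F v) \<noteq> {} \<longrightarrow>
           (\<forall>w\<in>V. \<not> frame (F w) \<subseteq> region (F u) \<inter> region (F v))))"

end

theory Submission
  imports Defs
begin


definition pierce :: "box \<Rightarrow> box \<Rightarrow> bool" where
  "pierce A B = (case A of (a1,a2,a3,a4) \<Rightarrow> case B of (b1,b2,b3,b4) \<Rightarrow>
      a1 < b1 \<and> b1 < a2 \<and> a2 < b2 \<and> a3 < b3 \<and> b4 < a4)"

definition inside :: "box \<Rightarrow> box \<Rightarrow> bool" where
  "inside A B = (case A of (a1,a2,a3,a4) \<Rightarrow> case B of (b1,b2,b3,b4) \<Rightarrow>
      b1 < a1 \<and> a2 < b2 \<and> b3 < a3 \<and> a4 < b4)"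

definition hgt :: "box \<Rightarrow> real" where
  "hgt A = (case A of (a1,a2,a3,a4) \<Rightarrow> a4 - a3)"

lemma mem_frame:
  "(x,y) \<in> frame (a1,a2,a3,a4) \<longleftrightarrow>
     (x = a1 \<and> a3 \<le> y \<and> y \<le> a4) \<or> (x = a2 \<and> a3 \<le> y \<and> y \<le> a4) \<or>
     (y = a3 \<and> a1 \<le> x \<and> x \<le> a2) \<or> (y = a4 \<and> a1 \<le> x \<and> x \<le> a2)"
  by (auto simp: frame_def left_side_def right_side_def top_side_def bottom_side_def)

lemma mem_left: "(x,y) \<in> left_side (a1,a2,a3,a4) \<longleftrightarrow> x = a1 \<and> a3 \<le> y \<and> y \<le> a4"
  by (auto simp: left_side_def)
lemma mem_right: "(x,y) \<in> right_side (a1,a2,a3,a4) \<longleftrightarrow> x = a2 \<and> a3 \<le> y \<and> y \<le> a4"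
  by (auto simp: right_side_def)
lemma mem_top: "(x,y) \<in> top_side (a1,a2,a3,a4) \<longleftrightarrow> y = a4 \<and> a1 \<le> x \<and> x \<le> a2"
  by (auto simp: top_side_def)
lemma mem_bot: "(x,y) \<in> bottom_side (a1,a2,a3,a4) \<longleftrightarrow> y = a3 \<and> a1 \<le> x \<and> x \<le> a2"
  by (auto simp: bottom_side_def)
lemma mem_corners: "p \<in> corners (a1,a2,a3,a4) \<longleftrightarrow> p = (a1,a3) \<or> p = (a1,a4) \<or> p = (a2,a3) \<or> p = (a2,a4)"
  by (auto simp: corners_def)

lemma disjD: "S \<inter> T = {} \<Longrightarrow> p \<in> S \<Longrightarrow> p \<notin> T" by blast

lemma hgt_pierce: "valid_box B \<Longrightarrow> pierce A B \<Longrightarrow> hgt B < hgt A"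
  by (cases A; cases B) (auto simp: pierce_def hgt_def valid_box_def)

lemma inside_asym: "inside A B \<Longrightarrow> \<not> inside B A"
  by (cases A; cases B) (auto simp: inside_def)

lemma nest_aux:
  fixes a1 a2 a3 a4 b1 b2 b3 b4 c1 c2 c3 c4 :: real
  assumes v: "a1 < a2" "a3 < a4" "b1 < b2" "b3 < b4" "c1 < c2" "c3 < c4"
  and pA: "a1 < c1" "c1 < a2" "a2 < c2" "a3 < c3" "c4 < a4"
  and pB: "b1 < c1" "c1 < b2" "b2 < c2" "b3 < c3" "c4 < b4"
  and d: "frame (a1,a2,a3,a4) \<inter> frame (b1,b2,b3,b4) = {}"
  and le: "a2 \<le> b2"
  shows "b1 < a1 \<and> a2 < b2 \<and> b3 < a3 \<and> a4 < b4"
proof -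
  have "a2 \<noteq> b2" using disjD[OF d, of "(a2,c3)"] v pA pB by (simp add: mem_frame; smt (verit))
  moreover have "a4 < b4" using disjD[OF d, of "(a2,b4)"] v pA pB le by (simp add: mem_frame; smt (verit))
  moreover have "b3 < a3" using disjD[OF d, of "(a2,b3)"] v pA pB le by (simp add: mem_frame; smt (verit))
  moreover have "b1 < a1" using disjD[OF d, of "(b1,a4)"] v pA pB le \<open>a4 < b4\<close> \<open>b3 < a3\<close>
    by (simp add: mem_frame; smt (verit))
  ultimately show ?thesis using le by auto
qed

lemma nest:
  assumes "valid_box A" "valid_box B" "valid_box C" "pierce A C" "pierce B C"
    "frame A \<inter> frame B = {}"
  shows "inside A B \<or> inside B A"
proof -
  obtain a1 a2 a3 a4 where A: "A = (a1,a2,a3,a4)" by (cases A) auto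
  obtain b1 b2 b3 b4 where B: "B = (b1,b2,b3,b4)" by (cases B) auto
  obtain c1 c2 c3 c4 where C: "C = (c1,c2,c3,c4)" by (cases C) auto
  have d2: "frame (b1,b2,b3,b4) \<inter> frame (a1,a2,a3,a4) = {}" using assms(6) A B by auto
  show ?thesis
  proof (cases "a2 \<le> b2")
    case True thus ?thesis using nest_aux[of a1 a2 a3 a4 b1 b2 b3 b4 c1 c2 c3 c4] assms A B C
      by (auto simp: valid_box_def pierce_def inside_def)
  next
    case False thus ?thesis using nest_aux[of b1 b2 b3 b4 a1 a2 a3 a4 c1 c2 c3 c4] d2 assms A B C
      by (auto simp: valid_box_def pierce_def inside_def)
  qed
qed

lemma prop_inside:
  assumes "valid_box W" "valid_box A" "valid_box B" "inside A W" "pierce A B \<or> pierce B A"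
    "frame B \<inter> frame W = {}"
  shows "inside B W"
proof -
  obtain a1 a2 a3 a4 where A: "A = (a1,a2,a3,a4)" by (cases A) auto
  obtain b1 b2 b3 b4 where B: "B = (b1,b2,b3,b4)" by (cases B) auto
  obtain w1 w2 w3 w4 where W: "W = (w1,w2,w3,w4)" by (cases W) auto
  note d = assms(6)[unfolded B W]
  have v: "a1 < a2" "a3 < a4" "b1 < b2" "b3 < b4" "w1 < w2" "w3 < w4"
    using assms(1-3) A B W by (auto simp: valid_box_def)
  have i: "w1 < a1" "a2 < w2" "w3 < a3" "a4 < w4" using assms(4) A W by (auto simp: inside_def)
  from assms(5) show ?thesis
  proof
    assume "pierce A B"
    hence p: "a1 < b1" "b1 < a2" "a2 < b2" "a3 < b3" "b4 < a4" using A B by (auto simp: pierce_def)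
    have "b2 < w2" using disjD[OF d, of "(w2,b3)"] v i p by (simp add: mem_frame; smt (verit))
    thus ?thesis using v i p A B W by (auto simp: inside_def)
  next
    assume "pierce B A"
    hence p: "b1 < a1" "a1 < b2" "b2 < a2" "b3 < a3" "a4 < b4" using A B by (auto simp: pierce_def)
    have "b4 < w4" using disjD[OF d, of "(b2,w4)"] v i p by (simp add: mem_frame; smt (verit))
    moreover have "w3 < b3" using disjD[OF d, of "(b2,w3)"] v i p by (simp add: mem_frame; smt (verit))
    moreover have "w1 < b1" using disjD[OF d, of "(w1,b4)"] v i p \<open>b4 < w4\<close> \<open>w3 < b3\<close>
      by (simp add: mem_frame; smt (verit))
    ultimately show ?thesis using v i p A B W by (auto simp: inside_def)
  qed
qed

lemma right_pierce:
  assumes "valid_box A" "valid_box B"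
    "right_side A \<inter> top_side B \<noteq> {}" "right_side A \<inter> bottom_side B \<noteq> {}"
    "corners A \<inter> frame B = {}" "corners B \<inter> frame A = {}" "left_side A \<inter> frame B = {}"
  shows "pierce A B"
proof -
  obtain a1 a2 a3 a4 where A: "A = (a1,a2,a3,a4)" by (cases A) auto
  obtain b1 b2 b3 b4 where B: "B = (b1,b2,b3,b4)" by (cases B) auto
  have v: "a1 < a2" "a3 < a4" "b1 < b2" "b3 < b4"
    using assms(1-2) A B by (auto simp: valid_box_def)
  have q: "b1 \<le> a2" "a2 \<le> b2" "a3 \<le> b4" "b4 \<le> a4" using assms(3) A B
    by (auto simp: right_side_def top_side_def)
  have r: "a3 \<le> b3" "b3 \<le> a4" using assms(4) A B
    by (auto simp: right_side_def bottom_side_def)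
  note cA = assms(5)[unfolded A B] and cB = assms(6)[unfolded A B] and lA = assms(7)[unfolded A B]
  have "a2 \<noteq> b1" using disjD[OF cB, of "(b1,b4)"] v q r by (simp add: mem_frame mem_corners)
  moreover have "a2 \<noteq> b2" using disjD[OF cB, of "(b2,b4)"] v q r by (simp add: mem_frame mem_corners)
  moreover have "b4 \<noteq> a4" using disjD[OF cA, of "(a2,a4)"] v q r by (simp add: mem_frame mem_corners)
  moreover have "b3 \<noteq> a3" using disjD[OF cA, of "(a2,a3)"] v q r by (simp add: mem_frame mem_corners)
  moreover have "a1 < b1" using disjD[OF lA, of "(a1,b4)"] v q r by (simp add: mem_frame mem_left; smt (verit))
  ultimately show ?thesis using A B v q r by (auto simp: pierce_def)
qed

lemma meet_pierce:
  assumes "valid_box A" "valid_box B" "frame A \<inter> frame B \<noteq> {}"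
    "corners A \<inter> frame B = {}" "corners B \<inter> frame A = {}"
    "left_side A \<inter> frame B = {}" "left_side B \<inter> frame A = {}"
    "right_side A \<inter> frame B \<noteq> {} \<longrightarrow> right_side A \<inter> top_side B \<noteq> {} \<and> right_side A \<inter> bottom_side B \<noteq> {}"
    "right_side B \<inter> frame A \<noteq> {} \<longrightarrow> right_side B \<inter> top_side A \<noteq> {} \<and> right_side B \<inter> bottom_side A \<noteq> {}"
  shows "pierce A B \<or> pierce B A"
proof -
  obtain p where p: "p \<in> frame A" "p \<in> frame B" using assms(3) by blast
  show ?thesis
  proof (cases "p \<in> right_side A")
    case True
    hence "right_side A \<inter> frame B \<noteq> {}" using p by blast
    thus ?thesis using right_pierce[of A B] assms by blast
  next
    case nA: False
    show ?thesis
    proof (cases "p \<in> right_side B")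
      case True
      hence "right_side B \<inter> frame A \<noteq> {}" using p by blast
      thus ?thesis using right_pierce[of B A] assms by blast
    next
      case nB: False
      have "p \<notin> left_side A" "p \<notin> left_side B" using assms(6,7) p by blast+
      obtain a1 a2 a3 a4 where A: "A = (a1,a2,a3,a4)" by (cases A) auto
      obtain b1 b2 b3 b4 where B: "B = (b1,b2,b3,b4)" by (cases B) auto
      obtain x y where pxy: "p = (x,y)" by (cases p) auto
      have v: "a1 < a2" "a3 < a4" "b1 < b2" "b3 < b4"
        using assms(1-2) A B by (auto simp: valid_box_def)
      have hA: "(y = a3 \<or> y = a4) \<and> a1 \<le> x \<and> x \<le> a2"
        using p nA \<open>p \<notin> left_side A\<close> A pxy
        by (auto simp: frame_def mem_left mem_right mem_top mem_bot)
      have hB: "(y = b3 \<or> y = b4) \<and> b1 \<le> x \<and> x \<le> b2"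
        using p nB \<open>p \<notin> left_side B\<close> B pxy
        by (auto simp: frame_def mem_left mem_right mem_top mem_bot)
      note cA = assms(4)[unfolded A B] and cB = assms(5)[unfolded A B]
      show ?thesis
      proof (cases "a1 \<le> b1")
        case True
        then show ?thesis using disjD[OF cB, of "(b1,y)"] hA hB v
          by (simp add: mem_frame mem_corners; smt (verit))
      next
        case False
        then show ?thesis using disjD[OF cA, of "(a1,y)"] hA hB v
          by (simp add: mem_frame mem_corners; smt (verit))
      qed
    qed
  qed
qed



lemma inner_mem: "0 < k \<Longrightarrow> k < length p - 1 \<Longrightarrow> p ! k \<in> set (inner p)"
proof -
  assume a: "0 < k" "k < length p - 1"
  have "butlast (tl p) ! (k - 1) = p ! k" using a by (simp add: nth_butlast nth_tl)
  moreover have "k - 1 < length (butlast (tl p))" using a by simp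
  ultimately show ?thesis unfolding inner_def by (metis nth_mem)
qed

lemma inner_ex: "x \<in> set (inner p) \<Longrightarrow> \<exists>k. 0 < k \<and> k < length p - 1 \<and> x = p ! k"
proof -
  assume "x \<in> set (inner p)"
  then obtain i where i: "i < length (butlast (tl p))" "x = butlast (tl p) ! i"
    unfolding inner_def by (auto simp: in_set_conv_nth)
  hence "x = p ! Suc i" by (simp add: nth_butlast nth_tl)
  thus ?thesis using i by (intro exI[of _ "Suc i"]) auto
qed

locale K4S =
  fixes V :: "'a set" and E :: "'a \<Rightarrow> 'a \<Rightarrow> bool" and b :: "nat \<Rightarrow> 'a" and P :: "nat \<Rightarrow> nat \<Rightarrow> 'a list"
  assumes binj: "inj_on b {0..<4}"
  and pth: "\<And>i j. i < j \<Longrightarrow> j < 4 \<Longrightarrow>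
          distinct (P i j) \<and> length (P i j) \<ge> 4 \<and>
          hd (P i j) = b i \<and> last (P i j) = b j \<and>
          set (inner (P i j)) \<inter> b ` {0..<4} = {}"
  and idisj: "\<And>i j k l. i < j \<Longrightarrow> j < 4 \<Longrightarrow> k < l \<Longrightarrow> l < 4 \<Longrightarrow> (i, j) \<noteq> (k, l) \<Longrightarrow>
          set (inner (P i j)) \<inter> set (inner (P k l)) = {}"
  and Vdef: "V = (\<Union>i\<in>{0..<4}. \<Union>j\<in>{i<..<4}. set (P i j))"
  and Edef: "\<And>u v. E u v \<longleftrightarrow>
          (\<exists>i j n. i < j \<and> j < 4 \<and> Suc n < length (P i j) \<and>
             ((u = P i j ! n \<and> v = P i j ! Suc n) \<or> (v = P i j ! n \<and> u = P i j ! Suc n)))"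
begin

abbreviation "L i j \<equiv> length (P i j)"

lemma dist: "i < j \<Longrightarrow> j < 4 \<Longrightarrow> distinct (P i j)" using pth by blast
lemma len4: "i < j \<Longrightarrow> j < 4 \<Longrightarrow> 4 \<le> L i j" using pth by blast
lemma nth0: "i < j \<Longrightarrow> j < 4 \<Longrightarrow> P i j ! 0 = b i"
  using pth[of i j] by (metis hd_conv_nth list.size(3) not_numeral_le_zero)
lemma nthL: "i < j \<Longrightarrow> j < 4 \<Longrightarrow> P i j ! (L i j - 1) = b j"
  using pth[of i j] by (metis last_conv_nth list.size(3) not_numeral_le_zero)

lemma Esym: "E u v \<Longrightarrow> E v u" using Edef by blast

lemma Eedge: "i < j \<Longrightarrow> j < 4 \<Longrightarrow> Suc n < L i j \<Longrightarrow> E (P i j ! n) (P i j ! Suc n)"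
  using Edef by blast

lemma inV: "i < j \<Longrightarrow> j < 4 \<Longrightarrow> k < L i j \<Longrightarrow> P i j ! k \<in> V"
proof -
  assume a: "i < j" "j < 4" "k < L i j"
  have "P i j ! k \<in> set (P i j)" using a by simp
  moreover have "i \<in> {0..<4}" "j \<in> {i<..<4}" using a by auto
  ultimately show ?thesis unfolding Vdef by blast
qed

lemma Vex: "x \<in> V \<Longrightarrow> \<exists>i j k. i < j \<and> j < 4 \<and> k < L i j \<and> x = P i j ! k"
proof -
  assume "x \<in> V"
  then obtain i j where ij: "i < j" "j < 4" "x \<in> set (P i j)" unfolding Vdef by auto
  then obtain k where "k < L i j" "x = P i j ! k" by (auto simp: in_set_conv_nth)
  thus ?thesis using ij by blast
qed

lemma binV: "a < 4 \<Longrightarrow> b a \<in> V"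
proof -
  assume a: "a < 4"
  show ?thesis
  proof (cases "a = 0")
    case True
    have "0 < L 0 1" using len4[of 0 1] by linarith
    hence "P 0 1 ! 0 \<in> V" using inV[of 0 1 0] by simp
    thus ?thesis using nth0[of 0 1] True by simp
  next
    case False
    hence "P 0 a ! (L 0 a - 1) = b a" using nthL[of 0 a] a by auto
    moreover have "P 0 a ! (L 0 a - 1) \<in> V" using inV[of 0 a "L 0 a - 1"] len4[of 0 a] a False by simp
    ultimately show ?thesis by simp
  qed
qed

lemma Ein: "E x y \<Longrightarrow> x \<in> V \<and> y \<in> V"
  using Edef inV by (metis Suc_lessD)

lemma Eneq: "E x y \<Longrightarrow> x \<noteq> y"
proof -
  assume "E x y"
  then obtain i j n where h: "i < j" "j < 4" "Suc n < L i j"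
     "(x = P i j ! n \<and> y = P i j ! Suc n) \<or> (y = P i j ! n \<and> x = P i j ! Suc n)"
    using Edef by blast
  have "P i j ! n \<noteq> P i j ! Suc n" using dist[OF h(1,2)] h(3) by (simp add: nth_eq_iff_index_eq)
  thus ?thesis using h(4) by auto
qed

lemma IU:
  assumes "i < j" "j < 4" "0 < k" "k < L i j - 1" "i' < j'" "j' < 4" "k' < L i' j'"
    "P i j ! k = P i' j' ! k'"
  shows "i' = i \<and> j' = j \<and> k' = k"
proof -
  have x: "P i j ! k \<in> set (inner (P i j))" using inner_mem assms by blast
  have nb: "P i j ! k \<notin> b ` {0..<4}" using x pth[OF assms(1,2)] by blast
  have "k' \<noteq> 0"
  proof
    assume "k' = 0"
    hence "P i j ! k = b i'" using assms(8) nth0[OF assms(5,6)] by simp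
    moreover have "i' \<in> {0..<4}" using assms by simp
    ultimately show False using nb by blast
  qed
  moreover have "k' \<noteq> L i' j' - 1"
  proof
    assume "k' = L i' j' - 1"
    hence "P i j ! k = b j'" using assms(8) nthL[OF assms(5,6)] by simp
    moreover have "j' \<in> {0..<4}" using assms by simp
    ultimately show False using nb by blast
  qed
  ultimately have "0 < k'" "k' < L i' j' - 1" using assms(7) by auto
  hence "P i' j' ! k' \<in> set (inner (P i' j'))" by (rule inner_mem)
  hence "P i j ! k \<in> set (inner (P i' j'))" using assms(8) by simp
  hence same: "i' = i \<and> j' = j" using idisj[of i j i' j'] x assms by blast
  hence "k' = k" using dist[OF assms(1,2)] assms by (simp add: nth_eq_iff_index_eq)
  thus ?thesis using same by simp
qed

lemma BP:
  assumes "i < j" "j < 4" "k < L i j" "a < 4" "P i j ! k = b a"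
  shows "(k = 0 \<and> a = i) \<or> (k = L i j - 1 \<and> a = j)"
proof -
  have "\<not> (0 < k \<and> k < L i j - 1)"
  proof
    assume "0 < k \<and> k < L i j - 1"
    hence "P i j ! k \<in> set (inner (P i j))" using inner_mem by blast
    thus False using pth[OF assms(1,2)] assms by auto
  qed
  hence "k = 0 \<or> k = L i j - 1" using assms by auto
  thus ?thesis
  proof
    assume k: "k = 0"
    hence "b i = b a" using assms nth0[OF assms(1,2)] by simp
    hence "i = a" using inj_onD[OF binj] assms by simp
    thus ?thesis using k by simp
  next
    assume k: "k = L i j - 1"
    hence "b j = b a" using assms nthL[OF assms(1,2)] by simp
    hence "j = a" using inj_onD[OF binj] assms by simp
    thus ?thesis using k by simp
  qed
qed

lemma G1:
  assumes "i < j" "j < 4" "0 < k" "k < L i j - 1" "E (P i j ! k) y"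
  shows "y = P i j ! (k - 1) \<or> y = P i j ! (k + 1)"
proof -
  obtain i' j' n where h: "i' < j'" "j' < 4" "Suc n < L i' j'"
     "(P i j ! k = P i' j' ! n \<and> y = P i' j' ! Suc n) \<or> (y = P i' j' ! n \<and> P i j ! k = P i' j' ! Suc n)"
    using assms(5) Edef by blast
  from h(4) show ?thesis
  proof
    assume a: "P i j ! k = P i' j' ! n \<and> y = P i' j' ! Suc n"
    hence "i' = i \<and> j' = j \<and> n = k" using IU[OF assms(1-4) h(1,2), of n] h(3) by auto
    thus ?thesis using a by auto
  next
    assume a: "y = P i' j' ! n \<and> P i j ! k = P i' j' ! Suc n"
    hence "i' = i \<and> j' = j \<and> Suc n = k" using IU[OF assms(1-4) h(1,2), of "Suc n"] h(3) by auto
    thus ?thesis using a by auto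
  qed
qed

lemma G2:
  assumes "a < 4" "E (b a) y"
  shows "\<exists>i j. i < j \<and> j < 4 \<and> ((a = i \<and> y = P i j ! 1) \<or> (a = j \<and> y = P i j ! (L i j - 2)))"
proof -
  obtain i j n where h: "i < j" "j < 4" "Suc n < L i j"
     "(b a = P i j ! n \<and> y = P i j ! Suc n) \<or> (y = P i j ! n \<and> b a = P i j ! Suc n)"
    using assms(2) Edef by blast
  from h(4) show ?thesis
  proof
    assume c: "b a = P i j ! n \<and> y = P i j ! Suc n"
    hence "(n = 0 \<and> a = i) \<or> (n = L i j - 1 \<and> a = j)" using BP[OF h(1,2), of n a] h(3) assms by auto
    hence "n = 0 \<and> a = i" using h(3) by auto
    thus ?thesis using c h by auto
  next
    assume c: "y = P i j ! n \<and> b a = P i j ! Suc n"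
    hence "(Suc n = 0 \<and> a = i) \<or> (Suc n = L i j - 1 \<and> a = j)" using BP[OF h(1,2), of "Suc n" a] h(3) assms by auto
    hence "Suc n = L i j - 1 \<and> a = j" by auto
    hence "n = L i j - 2 \<and> a = j" by auto
    thus ?thesis using c h by auto
  qed
qed

abbreviation "nb w z \<equiv> z = w \<or> E w z"

lemma Vcases:
  assumes "w \<in> V"
  shows "(\<exists>a<4. w = b a) \<or> (\<exists>i j m. i < j \<and> j < 4 \<and> 0 < m \<and> m < L i j - 1 \<and> w = P i j ! m)"
proof -
  obtain i j k where h: "i < j" "j < 4" "k < L i j" "w = P i j ! k" using Vex[OF assms] by blast
  show ?thesis
  proof (cases "k = 0")
    case True thus ?thesis using h nth0[OF h(1,2)] by (metis dual_order.strict_trans)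
  next
    case False
    show ?thesis
    proof (cases "k = L i j - 1")
      case True thus ?thesis using h nthL[OF h(1,2)] by metis
    next
      case F2: False
      hence "0 < k" "k < L i j - 1" using False h(3) by auto
      thus ?thesis using h by blast
    qed
  qed
qed

lemma BlkB:
  assumes "a < 4" "nb (b a) z" "c < e" "e < 4" "t < L c e" "z = P c e ! t"
  shows "(a = c \<and> t \<le> 1) \<or> (a = e \<and> L c e - 2 \<le> t)"
  using assms(2)
proof
  assume "z = b a"
  thus ?thesis using BP[OF assms(3,4,5,1)] assms(6) by auto
next
  assume "E (b a) z"
  then obtain i j where ij: "i < j" "j < 4" "(a = i \<and> z = P i j ! 1) \<or> (a = j \<and> z = P i j ! (L i j - 2))"
    using G2[OF assms(1)] by blast
  have l4: "4 \<le> L i j" using len4[OF ij(1,2)] .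
  from ij(3) show ?thesis
  proof
    assume h: "a = i \<and> z = P i j ! 1"
    hence "c = i \<and> e = j \<and> t = 1" using IU[OF ij(1,2), of 1 c e t] l4 assms by auto
    thus ?thesis using h by auto
  next
    assume h: "a = j \<and> z = P i j ! (L i j - 2)"
    hence "c = i \<and> e = j \<and> t = L i j - 2" using IU[OF ij(1,2), of "L i j - 2" c e t] l4 assms by auto
    thus ?thesis using h by auto
  qed
qed

lemma BlkBb:
  assumes "a < 4" "a' < 4" "nb (b a) (b a')"
  shows "a' = a"
  using assms(3)
proof
  assume "b a' = b a" thus ?thesis using inj_onD[OF binj] assms by simp
next
  assume "E (b a) (b a')"
  then obtain i j where ij: "i < j" "j < 4" "(a = i \<and> b a' = P i j ! 1) \<or> (a = j \<and> b a' = P i j ! (L i j - 2))"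
    using G2[OF assms(1)] by blast
  have l4: "4 \<le> L i j" using len4[OF ij(1,2)] .
  from ij(3) show ?thesis
  proof
    assume "a = i \<and> b a' = P i j ! 1"
    thus ?thesis using BP[OF ij(1,2), of 1 a'] l4 assms by auto
  next
    assume "a = j \<and> b a' = P i j ! (L i j - 2)"
    thus ?thesis using BP[OF ij(1,2), of "L i j - 2" a'] l4 assms by auto
  qed
qed

lemma nbI:
  assumes "i < j" "j < 4" "0 < m" "m < L i j - 1" "nb (P i j ! m) z"
  shows "\<exists>m'. m - 1 \<le> m' \<and> m' \<le> m + 1 \<and> m' < L i j \<and> z = P i j ! m'"
  using assms(5)
proof
  assume "z = P i j ! m" thus ?thesis using assms by (intro exI[of _ m]) auto
next
  assume "E (P i j ! m) z"
  hence "z = P i j ! (m - 1) \<or> z = P i j ! (m + 1)" using G1[OF assms(1-4)] by blast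
  thus ?thesis
  proof
    assume "z = P i j ! (m - 1)" thus ?thesis using assms by (intro exI[of _ "m - 1"]) auto
  next
    assume "z = P i j ! (m + 1)" thus ?thesis using assms by (intro exI[of _ "m + 1"]) auto
  qed
qed

lemma BlkI:
  assumes "i < j" "j < 4" "0 < m" "m < L i j - 1" "nb (P i j ! m) z"
    "c < e" "e < 4" "t < L c e" "z = P c e ! t"
  shows "(c = i \<and> e = j \<and> m - 1 \<le> t \<and> t \<le> m + 1) \<or> ((c, e) \<noteq> (i, j) \<and> (t = 0 \<or> t = L c e - 1))"
proof -
  obtain m' where m': "m - 1 \<le> m'" "m' \<le> m + 1" "m' < L i j" "z = P i j ! m'"
    using nbI[OF assms(1-5)] by blast
  show ?thesis
  proof (cases "(c, e) = (i, j)")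
    case True
    hence "t = m'" using dist[OF assms(1,2)] m' assms(8,9) by (auto simp: nth_eq_iff_index_eq)
    thus ?thesis using True m' by auto
  next
    case False
    have "\<not> (0 < t \<and> t < L c e - 1)"
    proof
      assume "0 < t \<and> t < L c e - 1"
      hence "i = c \<and> j = e" using IU[OF assms(6,7), of t i j m'] assms m' by auto
      thus False using False by auto
    qed
    thus ?thesis using False assms(8) by auto
  qed
qed

lemma BlkIb:
  assumes "i < j" "j < 4" "0 < m" "m < L i j - 1" "a < 4" "nb (P i j ! m) (b a)"
  shows "(a = i \<and> m = 1) \<or> (a = j \<and> m = L i j - 2)"
proof -
  obtain m' where m': "m - 1 \<le> m'" "m' \<le> m + 1" "m' < L i j" "b a = P i j ! m'"
    using nbI[OF assms(1-4,6)] by blast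
  have "(m' = 0 \<and> a = i) \<or> (m' = L i j - 1 \<and> a = j)" using BP[OF assms(1,2) m'(3) assms(5)] m'(4) by simp
  thus ?thesis using m' assms(3,4) by auto
qed

definition Rel :: "'a \<Rightarrow> 'a \<Rightarrow> 'a \<Rightarrow> bool" where
  "Rel w x y \<longleftrightarrow> E x y \<and> \<not> nb w x \<and> \<not> nb w y"

lemma Rel_sym: "(Rel w)\<^sup>*\<^sup>* x y \<Longrightarrow> (Rel w)\<^sup>*\<^sup>* y x"
proof (induction rule: rtranclp.induct)
  case (rtrancl_refl a) thus ?case by simp
next
  case (rtrancl_into_rtrancl a y z)
  have "Rel w z y" using rtrancl_into_rtrancl(2) Esym unfolding Rel_def by blast
  thus ?case using rtrancl_into_rtrancl(3) by (rule converse_rtranclp_into_rtranclp)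
qed

lemma seg:
  assumes "i < j" "j < 4" "hi < L i j" "lo \<le> hi" "\<forall>t. lo \<le> t \<and> t \<le> hi \<longrightarrow> \<not> nb w (P i j ! t)"
  shows "(Rel w)\<^sup>*\<^sup>* (P i j ! lo) (P i j ! hi)"
proof -
  have "\<forall>d. lo + d \<le> hi \<longrightarrow> (Rel w)\<^sup>*\<^sup>* (P i j ! lo) (P i j ! (lo + d))"
  proof
    fix d show "lo + d \<le> hi \<longrightarrow> (Rel w)\<^sup>*\<^sup>* (P i j ! lo) (P i j ! (lo + d))"
    proof (induction d)
      case 0 thus ?case by simp
    next
      case (Suc d)
      show ?case
      proof
        assume a: "lo + Suc d \<le> hi"
        hence IH: "(Rel w)\<^sup>*\<^sup>* (P i j ! lo) (P i j ! (lo + d))" using Suc by simp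
        have "E (P i j ! (lo + d)) (P i j ! Suc (lo + d))" using Eedge[OF assms(1,2)] a assms(3) by simp
        moreover have "\<not> nb w (P i j ! (lo + d))" "\<not> nb w (P i j ! Suc (lo + d))" using assms(5) a by auto
        ultimately have "Rel w (P i j ! (lo + d)) (P i j ! (lo + Suc d))" unfolding Rel_def by simp
        thus "(Rel w)\<^sup>*\<^sup>* (P i j ! lo) (P i j ! (lo + Suc d))" using IH by (meson rtranclp.rtrancl_into_rtrancl)
      qed
    qed
  qed
  thus ?thesis using assms(4) by (metis le_add_diff_inverse order_refl)
qed

lemma PS:
  assumes "w \<in> V" "c < e" "e < 4" "k < L c e" "\<not> nb w (P c e ! k)"
  shows "(\<forall>t\<le>k. \<not> nb w (P c e ! t)) \<or> (\<forall>t. k \<le> t \<longrightarrow> t < L c e \<longrightarrow> \<not> nb w (P c e ! t))"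
proof (rule ccontr)
  assume "\<not> ?thesis"
  then obtain t1 t2 where t: "t1 \<le> k" "nb w (P c e ! t1)" "k \<le> t2" "t2 < L c e" "nb w (P c e ! t2)"
    by blast
  have t1k: "t1 < k" using t assms(5) by (metis le_neq_implies_less)
  have t2k: "k < t2" using t assms(5) by (metis le_neq_implies_less)
  have l4: "4 \<le> L c e" using len4[OF assms(2,3)] .
  from Vcases[OF assms(1)] show False
  proof
    assume "\<exists>a<4. w = b a"
    then obtain a where a: "a < 4" "w = b a" by blast
    have "(a = c \<and> t1 \<le> 1) \<or> (a = e \<and> L c e - 2 \<le> t1)"
      using BlkB[OF a(1) _ assms(2,3), of "P c e ! t1" t1] t a t1k t2k assms by auto
    moreover have "(a = c \<and> t2 \<le> 1) \<or> (a = e \<and> L c e - 2 \<le> t2)"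
      using BlkB[OF a(1) _ assms(2,3), of "P c e ! t2" t2] t a assms by auto
    ultimately show False using t1k t2k t(4) assms(2) l4 by auto
  next
    assume "\<exists>i j m. i < j \<and> j < 4 \<and> 0 < m \<and> m < L i j - 1 \<and> w = P i j ! m"
    then obtain i j m where w: "i < j" "j < 4" "0 < m" "m < L i j - 1" "w = P i j ! m" by blast
    have l4': "4 \<le> L i j" using len4[OF w(1,2)] .
    have A: "(c = i \<and> e = j \<and> m - 1 \<le> t1 \<and> t1 \<le> m + 1) \<or> ((c, e) \<noteq> (i, j) \<and> (t1 = 0 \<or> t1 = L c e - 1))"
      using BlkI[OF w(1-4) _ assms(2,3), of "P c e ! t1" t1] t w t1k assms by auto
    have B: "(c = i \<and> e = j \<and> m - 1 \<le> t2 \<and> t2 \<le> m + 1) \<or> ((c, e) \<noteq> (i, j) \<and> (t2 = 0 \<or> t2 = L c e - 1))"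
      using BlkI[OF w(1-4) _ assms(2,3), of "P c e ! t2" t2] t w assms by auto
    show False
    proof (cases "(c, e) = (i, j)")
      case True
      hence "k = m" using A B t1k t2k by auto
      thus False using assms(5) w True by auto
    next
      case False
      hence "t1 = 0" "t2 = L c e - 1" using A B t1k t2k t(4) by auto
      hence "nb w (b c)" "nb w (b e)" using t nth0[OF assms(2,3)] nthL[OF assms(2,3)] by auto
      hence "(c = i \<and> m = 1) \<or> (c = j \<and> m = L i j - 2)" "(e = i \<and> m = 1) \<or> (e = j \<and> m = L i j - 2)"
        using BlkIb[OF w(1-4)] w(5) assms(2,3) by auto
      thus False using assms(2) w(1) l4' False by auto
    qed
  qed
qed

lemma toBranch:
  assumes "w \<in> V" "x \<in> V" "\<not> nb w x"
  shows "\<exists>a<4. \<not> nb w (b a) \<and> (Rel w)\<^sup>*\<^sup>* x (b a)"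
proof -
  obtain c e k where h: "c < e" "e < 4" "k < L c e" "x = P c e ! k" using Vex[OF assms(2)] by blast
  have l4: "4 \<le> L c e" using len4[OF h(1,2)] .
  have "\<not> nb w (P c e ! k)" using assms(3) h(4) by simp
  from PS[OF assms(1) h(1-3) this] show ?thesis
  proof
    assume pre: "\<forall>t\<le>k. \<not> nb w (P c e ! t)"
    have "(Rel w)\<^sup>*\<^sup>* (P c e ! 0) (P c e ! k)" using seg[OF h(1,2,3), of 0 w] pre by auto
    hence "(Rel w)\<^sup>*\<^sup>* x (b c)" using Rel_sym nth0[OF h(1,2)] h(4) by metis
    moreover have "\<not> nb w (b c)" using pre nth0[OF h(1,2)] by (metis le0)
    moreover have "c < 4" using h by simp
    ultimately show ?thesis by blast
  next
    assume suf: "\<forall>t. k \<le> t \<longrightarrow> t < L c e \<longrightarrow> \<not> nb w (P c e ! t)"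
    have "(Rel w)\<^sup>*\<^sup>* (P c e ! k) (P c e ! (L c e - 1))" using seg[OF h(1,2), of "L c e - 1" k w] suf h(3) by auto
    hence "(Rel w)\<^sup>*\<^sup>* x (b e)" using nthL[OF h(1,2)] h(4) by metis
    moreover have "\<not> nb w (P c e ! (L c e - 1))" using suf h(3) l4 by simp
    hence "\<not> nb w (b e)" using nthL[OF h(1,2)] by simp
    ultimately show ?thesis using h by auto
  qed
qed

lemma freePath:
  assumes "c < e" "e < 4" "\<forall>t<L c e. \<not> nb w (P c e ! t)"
  shows "(Rel w)\<^sup>*\<^sup>* (b c) (b e)"
proof -
  have l4: "4 \<le> L c e" using len4[OF assms(1,2)] .
  have "(Rel w)\<^sup>*\<^sup>* (P c e ! 0) (P c e ! (L c e - 1))" using seg[OF assms(1,2), of "L c e - 1" 0 w] assms(3) l4 by auto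
  thus ?thesis using nth0[OF assms(1,2)] nthL[OF assms(1,2)] by simp
qed

lemma branchConn_ord:
  assumes "w \<in> V" "a < a'" "a' < 4" "\<not> nb w (b a)" "\<not> nb w (b a')"
  shows "(Rel w)\<^sup>*\<^sup>* (b a) (b a')"
proof -
  have l4: "4 \<le> L a a'" using len4[OF assms(2,3)] .
  from Vcases[OF assms(1)] show ?thesis
  proof
    assume "\<exists>a0<4. w = b a0"
    then obtain a0 where a0: "a0 < 4" "w = b a0" by blast
    have "\<forall>t<L a a'. \<not> nb w (P a a' ! t)"
    proof (intro allI impI notI)
      fix t assume t: "t < L a a'" "nb w (P a a' ! t)"
      hence "(a0 = a \<and> t \<le> 1) \<or> (a0 = a' \<and> L a a' - 2 \<le> t)"
        using BlkB[OF a0(1) _ assms(2,3) t(1)] a0 by auto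
      thus False using assms(4,5) a0 by auto
    qed
    thus ?thesis using freePath[OF assms(2,3)] by blast
  next
    assume "\<exists>i j m. i < j \<and> j < 4 \<and> 0 < m \<and> m < L i j - 1 \<and> w = P i j ! m"
    then obtain i j m where w: "i < j" "j < 4" "0 < m" "m < L i j - 1" "w = P i j ! m" by blast
    have free: "(Rel w)\<^sup>*\<^sup>* (b c) (b e)" if ce: "c < e" "e < 4" "(c, e) \<noteq> (i, j)"
      "\<not> nb w (b c)" "\<not> nb w (b e)" for c e
    proof -
      have "\<forall>t<L c e. \<not> nb w (P c e ! t)"
      proof (intro allI impI notI)
        fix t assume t: "t < L c e" "nb w (P c e ! t)"
        hence "t = 0 \<or> t = L c e - 1" using BlkI[OF w(1-4) _ ce(1,2) t(1)] w(5) ce(3) by auto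
        thus False using t ce nth0[OF ce(1,2)] nthL[OF ce(1,2)] by auto
      qed
      thus ?thesis using freePath[OF ce(1,2)] by blast
    qed
    show ?thesis
    proof (cases "(a, a') = (i, j)")
      case False show ?thesis using free[OF assms(2,3) False assms(4,5)] .
    next
      case True
      have "\<exists>f::nat. f < 4 \<and> f \<noteq> i \<and> f \<noteq> j"
        by (rule exI[of _ "if i \<noteq> 0 \<and> j \<noteq> 0 then 0 else if i \<noteq> 1 \<and> j \<noteq> 1 then 1 else 2"]) auto
      then obtain f where f: "f < 4" "f \<noteq> i" "f \<noteq> j" by blast
      have nf: "\<not> nb w (b f)"
      proof
        assume "nb w (b f)"
        hence "(f = i \<and> m = 1) \<or> (f = j \<and> m = L i j - 2)" using BlkIb[OF w(1-4) f(1)] w(5) by simp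
        thus False using f by auto
      qed
      have ai: "a = i" "a' = j" using True by auto
      have c1: "(Rel w)\<^sup>*\<^sup>* (b i) (b f)"
      proof (cases "i < f")
        case True thus ?thesis using free[OF True f(1)] f nf assms(4) ai by auto
      next
        case False hence "f < i" using f by auto
        thus ?thesis using free[OF \<open>f < i\<close>] w f nf assms(4) ai Rel_sym by auto
      qed
      have c2: "(Rel w)\<^sup>*\<^sup>* (b f) (b j)"
      proof (cases "f < j")
        case True thus ?thesis using free[OF True w(2)] f nf assms(5) ai by auto
      next
        case False hence "j < f" using f by auto
        thus ?thesis using free[OF \<open>j < f\<close> f(1)] w f nf assms(5) ai Rel_sym by auto
      qed
      show ?thesis using c1 c2 ai by auto
    qed
  qed
qed

lemma branchConn:
  assumes "w \<in> V" "a < 4" "a' < 4" "\<not> nb w (b a)" "\<not> nb w (b a')"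
  shows "(Rel w)\<^sup>*\<^sup>* (b a) (b a')"
proof -
  consider "a < a'" | "a = a'" | "a' < a" by arith
  thus ?thesis
  proof cases
    case 1 thus ?thesis using branchConn_ord assms by blast
  next
    case 2 thus ?thesis by simp
  next
    case 3 thus ?thesis using branchConn_ord[OF assms(1) 3 assms(2,5,4)] Rel_sym by blast
  qed
qed

lemma Conn:
  assumes "w \<in> V" "x \<in> V" "y \<in> V" "\<not> nb w x" "\<not> nb w y"
  shows "(Rel w)\<^sup>*\<^sup>* x y"
proof -
  obtain a where a: "a < 4" "\<not> nb w (b a)" "(Rel w)\<^sup>*\<^sup>* x (b a)" using toBranch[OF assms(1,2,4)] by blast
  obtain a' where a': "a' < 4" "\<not> nb w (b a')" "(Rel w)\<^sup>*\<^sup>* y (b a')" using toBranch[OF assms(1,3,5)] by blast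
  have "(Rel w)\<^sup>*\<^sup>* (b a) (b a')" using branchConn[OF assms(1) a(1) a'(1) a(2) a'(2)] .
  thus ?thesis using a(3) Rel_sym[OF a'(3)] by (meson rtranclp_trans)
qed

definition T :: "nat \<Rightarrow> 'a set" where
  "T k = {x. \<exists>c e t. c < e \<and> e < 4 \<and> c \<noteq> k \<and> e \<noteq> k \<and> t < L c e \<and> x = P c e ! t}"

lemma T_sub: "T k \<subseteq> V" unfolding T_def using inV by blast

lemma V_fin: "finite V" unfolding Vdef by auto

lemma T_fin: "finite (T k)" using finite_subset[OF T_sub V_fin] .

lemma T_I: "c < e \<Longrightarrow> e < 4 \<Longrightarrow> c \<noteq> k \<Longrightarrow> e \<noteq> k \<Longrightarrow> t < L c e \<Longrightarrow> P c e ! t \<in> T k"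
  unfolding T_def by blast

lemma T_ne: "T k \<noteq> {}"
proof -
  obtain c e :: nat where ce: "c < e" "e < 4" "c \<noteq> k" "e \<noteq> k"
    by (rule that[of "if k = 0 then 1 else 0" "if k = 2 then 3 else 2"]) auto
  have "0 < L c e" using len4[OF ce(1,2)] by linarith
  thus ?thesis using T_I[OF ce, of 0] by blast
qed

definition nbrB :: "nat \<Rightarrow> nat \<Rightarrow> 'a" where
  "nbrB a d = (if a < d then P a d ! 1 else P d a ! (L d a - 2))"

lemma nbrB_props:
  assumes "a \<noteq> d" "a < 4" "d < 4"
  shows "E (b a) (nbrB a d) \<and> (\<exists>p q pos. p < q \<and> q < 4 \<and> {p, q} = {a, d} \<and> 0 < pos \<and> pos < L p q - 1 \<and> nbrB a d = P p q ! pos)"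
proof (cases "a < d")
  case True
  have l4: "4 \<le> L a d" using len4[OF True assms(3)] .
  have "E (P a d ! 0) (P a d ! Suc 0)" using Eedge[OF True assms(3), of 0] l4 by simp
  hence "E (b a) (nbrB a d)" using nth0[OF True assms(3)] True unfolding nbrB_def by simp
  moreover have "nbrB a d = P a d ! 1" using True unfolding nbrB_def by simp
  ultimately show ?thesis using True assms l4 by (intro conjI exI[of _ a] exI[of _ d] exI[of _ 1]) auto
next
  case False
  hence da: "d < a" using assms by auto
  have l4: "4 \<le> L d a" using len4[OF da assms(2)] .
  have "E (P d a ! (L d a - 2)) (P d a ! Suc (L d a - 2))" using Eedge[OF da assms(2), of "L d a - 2"] l4 by simp
  moreover have "Suc (L d a - 2) = L d a - 1" using l4 by simp
  ultimately have "E (b a) (nbrB a d)" using nthL[OF da assms(2)] False Esym unfolding nbrB_def by simp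
  moreover have "nbrB a d = P d a ! (L d a - 2)" using False unfolding nbrB_def by simp
  ultimately show ?thesis using da assms l4 by (intro conjI exI[of _ d] exI[of _ a] exI[of _ "L d a - 2"]) auto
qed

lemma NA:
  assumes "p < q" "q < 4" "0 < pos" "pos < L p q - 1"
    "p' < q'" "q' < 4" "0 < pos'" "pos' < L p' q' - 1" "(p', q') \<noteq> (p, q)"
  shows "\<not> E (P p q ! pos) (P p' q' ! pos') \<and> P p q ! pos \<noteq> P p' q' ! pos'"
proof (intro conjI notI)
  assume "E (P p q ! pos) (P p' q' ! pos')"
  hence "P p' q' ! pos' = P p q ! (pos - 1) \<or> P p' q' ! pos' = P p q ! (pos + 1)"
    using G1[OF assms(1-4)] by blast
  thus False
  proof
    assume "P p' q' ! pos' = P p q ! (pos - 1)"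
    hence "p = p' \<and> q = q'" using IU[OF assms(5-8) assms(1,2), of "pos - 1"] assms by auto
    thus False using assms(9) by auto
  next
    assume "P p' q' ! pos' = P p q ! (pos + 1)"
    hence "p = p' \<and> q = q'" using IU[OF assms(5-8) assms(1,2), of "pos + 1"] assms by auto
    thus False using assms(9) by auto
  qed
next
  assume "P p q ! pos = P p' q' ! pos'"
  hence "p' = p \<and> q' = q" using IU[OF assms(1-4) assms(5,6), of pos'] assms by auto
  thus False using assms(9) by auto
qed

lemma branch_nbrs:
  assumes "a < 4" "d < 4" "f < 4" "k < 4" "a \<noteq> d" "a \<noteq> f" "d \<noteq> f" "k \<noteq> a" "k \<noteq> d" "k \<noteq> f"
  shows "\<exists>u w. u \<in> T k \<and> w \<in> T k \<and> E (b a) u \<and> E (b a) w \<and> u \<noteq> w \<and> \<not> E u w"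
proof -
  obtain p q pos where 1: "E (b a) (nbrB a d)" "p < q" "q < 4" "{p, q} = {a, d}" "0 < pos" "pos < L p q - 1" "nbrB a d = P p q ! pos"
    using nbrB_props[OF assms(5,1,2)] by blast
  obtain p' q' pos' where 2: "E (b a) (nbrB a f)" "p' < q'" "q' < 4" "{p', q'} = {a, f}" "0 < pos'" "pos' < L p' q' - 1" "nbrB a f = P p' q' ! pos'"
    using nbrB_props[OF assms(6,1,3)] by blast
  have ne: "(p', q') \<noteq> (p, q)" using 1(4) 2(4) assms(7) by (auto simp: doubleton_eq_iff)
  have "nbrB a d \<in> T k" using T_I[OF 1(2,3), of k pos] 1 assms(8,9) by (auto simp: doubleton_eq_iff)
  moreover have "nbrB a f \<in> T k" using T_I[OF 2(2,3), of k pos'] 2 assms(8,10) by (auto simp: doubleton_eq_iff)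
  moreover have "\<not> E (nbrB a d) (nbrB a f) \<and> nbrB a d \<noteq> nbrB a f"
    using NA[OF 1(2,3,5,6) 2(2,3,5,6) ne] 1(7) 2(7) by simp
  ultimately show ?thesis using 1(1) 2(1) by blast
qed

lemma third: "c < 4 \<Longrightarrow> e < 4 \<Longrightarrow> k < 4 \<Longrightarrow> \<exists>f::nat. f < 4 \<and> f \<noteq> c \<and> f \<noteq> e \<and> f \<noteq> k"
  by (rule exI[of _ "if 0 \<notin> {c,e,k} then 0 else if 1 \<notin> {c,e,k} then 1 else if 2 \<notin> {c,e,k} then 2 else 3"])
     (auto split: if_splits)

lemma tri_nbrs:
  assumes "k < 4" "s \<in> T k"
  shows "\<exists>u w. u \<in> T k \<and> w \<in> T k \<and> E s u \<and> E s w \<and> u \<noteq> w \<and> \<not> E u w"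
proof -
  obtain c e m where h: "c < e" "e < 4" "c \<noteq> k" "e \<noteq> k" "m < L c e" "s = P c e ! m"
    using assms(2) unfolding T_def by blast
  have l4: "4 \<le> L c e" using len4[OF h(1,2)] .
  obtain f where f: "f < 4" "f \<noteq> c" "f \<noteq> e" "f \<noteq> k" using third[of c e k] h assms(1) by auto
  show ?thesis
  proof (cases "m = 0")
    case True
    hence "s = b c" using h nth0[OF h(1,2)] by simp
    thus ?thesis using branch_nbrs[of c e f k] h f assms(1) by auto
  next
    case m0: False
    show ?thesis
    proof (cases "m = L c e - 1")
      case True
      hence "s = b e" using h nthL[OF h(1,2)] by simp
      thus ?thesis using branch_nbrs[of e c f k] h f assms(1) by auto
    next
      case False
      hence mi: "0 < m" "m < L c e - 1" using m0 h(5) by auto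
      define u where "u = P c e ! (m - 1)"
      define w where "w = P c e ! (m + 1)"
      have "u \<in> T k" "w \<in> T k" unfolding u_def w_def using T_I[OF h(1-4)] mi by auto
      moreover have "E s u" using Eedge[OF h(1,2), of "m - 1"] mi h(6) Esym unfolding u_def by simp
      moreover have "E s w" using Eedge[OF h(1,2), of m] mi h(6) unfolding w_def by simp
      moreover have "u \<noteq> w" using dist[OF h(1,2)] mi unfolding u_def w_def by (simp add: nth_eq_iff_index_eq)
      moreover have "\<not> E u w"
      proof
        assume uw: "E u w"
        show False
        proof (cases "1 < m")
          case True
          hence "w = P c e ! (m - 1 - 1) \<or> w = P c e ! (m - 1 + 1)" using G1[OF h(1,2), of "m - 1" w] uw mi unfolding u_def by auto
          thus False using dist[OF h(1,2)] mi True unfolding w_def by (auto simp: nth_eq_iff_index_eq)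
        next
          case False
          hence m1: "m = 1" using mi by auto
          have "w = P c e ! 2" using m1 unfolding w_def by (simp add: numeral_2_eq_2)
          hence "E (P c e ! 2) u" using Esym[OF uw] by simp
          hence "u = P c e ! (2 - 1) \<or> u = P c e ! (2 + 1)" using G1[OF h(1,2), of 2 u] l4 by simp
          moreover have "0 < L c e" "Suc 0 < L c e" "3 < L c e" using l4 by auto
          ultimately show False using dist[OF h(1,2)] m1 unfolding u_def by (auto simp: nth_eq_iff_index_eq)
        qed
      qed
      ultimately show ?thesis by blast
    qed
  qed
qed

lemma tri_avoid:
  assumes "w \<in> V"
  shows "\<exists>k<4. \<forall>z\<in>T k. \<not> nb w z"
  using Vcases[OF assms]
proof
  assume "\<exists>a<4. w = b a"
  then obtain a where a: "a < 4" "w = b a" by blast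
  have "\<forall>z\<in>T a. \<not> nb w z"
  proof (intro ballI notI)
    fix z assume z: "z \<in> T a" "nb w z"
    then obtain c e t where h: "c < e" "e < 4" "c \<noteq> a" "e \<noteq> a" "t < L c e" "z = P c e ! t"
      unfolding T_def by blast
    show False using BlkB[OF a(1) _ h(1,2,5,6)] z(2) a(2) h(3,4) by auto
  qed
  thus ?thesis using a by blast
next
  assume "\<exists>i j m. i < j \<and> j < 4 \<and> 0 < m \<and> m < L i j - 1 \<and> w = P i j ! m"
  then obtain i j m where w: "i < j" "j < 4" "0 < m" "m < L i j - 1" "w = P i j ! m" by blast
  have l4: "4 \<le> L i j" using len4[OF w(1,2)] .
  define k where "k = (if m = L i j - 2 then j else i)"
  have "\<forall>z\<in>T k. \<not> nb w z"
  proof (intro ballI notI)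
    fix z assume z: "z \<in> T k" "nb w z"
    then obtain c e t where h: "c < e" "e < 4" "c \<noteq> k" "e \<noteq> k" "t < L c e" "z = P c e ! t"
      unfolding T_def by blast
    have A: "(c = i \<and> e = j \<and> m - 1 \<le> t \<and> t \<le> m + 1) \<or> ((c, e) \<noteq> (i, j) \<and> (t = 0 \<or> t = L c e - 1))"
      using BlkI[OF w(1-4) _ h(1,2,5,6)] z(2) w(5) by simp
    have kij: "k = i \<or> k = j" unfolding k_def by auto
    hence "t = 0 \<or> t = L c e - 1" using A h(3,4) by auto
    thus False
    proof
      assume "t = 0"
      hence "nb w (b c)" using z(2) h(6) nth0[OF h(1,2)] by simp
      hence "(c = i \<and> m = 1) \<or> (c = j \<and> m = L i j - 2)" using BlkIb[OF w(1-4), of c] w(5) h(1,2) by simp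
      thus False using h(3) l4 unfolding k_def by (auto split: if_splits)
    next
      assume "t = L c e - 1"
      hence "nb w (b e)" using z(2) h(6) nthL[OF h(1,2)] by simp
      hence "(e = i \<and> m = 1) \<or> (e = j \<and> m = L i j - 2)" using BlkIb[OF w(1-4), of e] w(5) h(2) by simp
      thus False using h(4) l4 unfolding k_def by (auto split: if_splits)
    qed
  qed
  moreover have "k < 4" unfolding k_def using w by auto
  ultimately show ?thesis by blast
qed

end


locale Rep = K4S V E b P for V :: "'a set" and E b P +
  fixes F :: "'a \<Rightarrow> box"
  assumes valid: "\<forall>v\<in>V. valid_box (F v)"
  and riff: "\<forall>u\<in>V. \<forall>v\<in>V. u \<noteq> v \<longrightarrow> (E u v \<longleftrightarrow> frame (F u) \<inter> frame (F v) \<noteq> {})"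
  and c1: "\<forall>u\<in>V. \<forall>v\<in>V. u \<noteq> v \<longrightarrow> corners (F u) \<inter> frame (F v) = {}"
  and c2: "\<forall>u\<in>V. \<forall>v\<in>V. u \<noteq> v \<longrightarrow> left_side (F u) \<inter> frame (F v) = {}"
  and c3: "\<forall>u\<in>V. \<forall>v\<in>V. u \<noteq> v \<longrightarrow> right_side (F u) \<inter> frame (F v) \<noteq> {} \<longrightarrow>
           right_side (F u) \<inter> top_side (F v) \<noteq> {} \<and>
           right_side (F u) \<inter> bottom_side (F v) \<noteq> {}"
begin

lemma EP: "E x y \<Longrightarrow> pierce (F x) (F y) \<or> pierce (F y) (F x)"
proof -
  assume e: "E x y"
  have xy: "x \<in> V" "y \<in> V" "x \<noteq> y" using Ein[OF e] Eneq[OF e] by auto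
  have yx: "y \<noteq> x" using xy by auto
  show ?thesis
  proof (rule meet_pierce)
    show "valid_box (F x)" "valid_box (F y)" using valid xy by auto
    show "frame (F x) \<inter> frame (F y) \<noteq> {}" using riff xy e by blast
    show "corners (F x) \<inter> frame (F y) = {}" "corners (F y) \<inter> frame (F x) = {}" using c1 xy yx by blast+
    show "left_side (F x) \<inter> frame (F y) = {}" "left_side (F y) \<inter> frame (F x) = {}" using c2 xy yx by blast+
    show "right_side (F x) \<inter> frame (F y) \<noteq> {} \<longrightarrow> right_side (F x) \<inter> top_side (F y) \<noteq> {} \<and> right_side (F x) \<inter> bottom_side (F y) \<noteq> {}"
      using c3 xy by blast
    show "right_side (F y) \<inter> frame (F x) \<noteq> {} \<longrightarrow> right_side (F y) \<inter> top_side (F x) \<noteq> {} \<and> right_side (F y) \<inter> bottom_side (F x) \<noteq> {}"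
      using c3 xy yx by blast
  qed
qed

lemma ND: "x \<in> V \<Longrightarrow> y \<in> V \<Longrightarrow> x \<noteq> y \<Longrightarrow> \<not> E x y \<Longrightarrow> frame (F x) \<inter> frame (F y) = {}"
  using riff by blast

lemma PROP:
  assumes "w \<in> V" "a \<in> V" "inside (F a) (F w)" "(Rel w)\<^sup>*\<^sup>* a z"
  shows "inside (F z) (F w)"
  using assms(4)
proof (induction rule: rtranclp_induct)
  case base thus ?case using assms(3) by simp
next
  case (step y z)
  have r: "E y z" "z \<noteq> w" "\<not> E w z" using step(2) unfolding Rel_def by auto
  have V: "y \<in> V" "z \<in> V" using Ein[OF r(1)] by auto
  have "\<not> E z w" using r(3) Esym by blast
  hence d: "frame (F z) \<inter> frame (F w) = {}" using ND[OF V(2) assms(1) r(2)] by simp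
  show ?case using prop_inside[OF _ _ _ step(3) EP[OF r(1)] d] valid V assms(1) by auto
qed

lemma container:
  assumes "w \<in> V" "a \<in> V" "\<not> nb w a" "inside (F a) (F w)" "z \<in> V" "\<not> nb w z"
  shows "inside (F z) (F w)"
  using PROP[OF assms(1,2,4) Conn[OF assms(1,2,5,3,6)]] .

lemma tri_container:
  assumes "k < 4"
  shows "\<exists>w a. w \<in> T k \<and> a \<in> T k \<and> \<not> nb w a \<and> inside (F a) (F w)"
proof -
  have fin: "finite (hgt ` F ` T k)" using T_fin by (intro finite_imageI)
  have ne: "hgt ` F ` T k \<noteq> {}" using T_ne by simp
  obtain m where m: "m \<in> hgt ` F ` T k" "\<not> (\<exists>x\<in>hgt ` F ` T k. x < m)"
    using ex_min_if_finite[OF fin ne] by blast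
  then obtain s where s: "s \<in> T k" "m = hgt (F s)" by blast
  have smin: "\<forall>t\<in>T k. hgt (F s) \<le> hgt (F t)"
  proof
    fix t assume "t \<in> T k"
    hence "hgt (F t) \<in> hgt ` F ` T k" by blast
    thus "hgt (F s) \<le> hgt (F t)" using m(2) s(2) by (meson not_less)
  qed
  obtain u w where uw: "u \<in> T k" "w \<in> T k" "E s u" "E s w" "u \<noteq> w" "\<not> E u w"
    using tri_nbrs[OF assms s(1)] by blast
  have Vs: "s \<in> V" "u \<in> V" "w \<in> V" using T_sub s(1) uw by auto
  have vv: "valid_box (F s)" "valid_box (F u)" "valid_box (F w)" using valid Vs by auto
  have pu: "pierce (F u) (F s)"
  proof -
    have "\<not> pierce (F s) (F u)"
    proof
      assume "pierce (F s) (F u)"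
      hence "hgt (F u) < hgt (F s)" using hgt_pierce vv(2) by blast
      moreover have "hgt (F s) \<le> hgt (F u)" using smin uw(1) by blast
      ultimately show False by simp
    qed
    thus ?thesis using EP[OF uw(3)] by blast
  qed
  have pw: "pierce (F w) (F s)"
  proof -
    have "\<not> pierce (F s) (F w)"
    proof
      assume "pierce (F s) (F w)"
      hence "hgt (F w) < hgt (F s)" using hgt_pierce vv(3) by blast
      moreover have "hgt (F s) \<le> hgt (F w)" using smin uw(2) by blast
      ultimately show False by simp
    qed
    thus ?thesis using EP[OF uw(4)] by blast
  qed
  have "inside (F u) (F w) \<or> inside (F w) (F u)"
    using nest[OF vv(2,3,1) pu pw ND[OF Vs(2,3) uw(5,6)]] .
  moreover have "\<not> nb w u" "\<not> nb u w" using uw(5,6) Esym by auto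
  ultimately show ?thesis using uw(1,2) by blast
qed

lemma contradiction: False
proof -
  obtain w1 a1 where c1': "w1 \<in> T 0" "a1 \<in> T 0" "\<not> nb w1 a1" "inside (F a1) (F w1)"
    using tri_container[of 0] by auto
  have V1: "w1 \<in> V" "a1 \<in> V" using c1' T_sub by auto
  obtain k where k: "k < 4" "\<forall>z\<in>T k. \<not> nb w1 z" using tri_avoid[OF V1(1)] by blast
  obtain w2 a2 where c2': "w2 \<in> T k" "a2 \<in> T k" "\<not> nb w2 a2" "inside (F a2) (F w2)"
    using tri_container[OF k(1)] by auto
  have V2: "w2 \<in> V" "a2 \<in> V" using c2' T_sub by auto
  have n12: "\<not> nb w1 w2" using k(2) c2'(1) by blast
  hence n21: "\<not> nb w2 w1" using Esym by auto
  have "inside (F w2) (F w1)" using container[OF V1 c1'(3,4) V2(1) n12] .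
  moreover have "inside (F w1) (F w2)" using container[OF V2 c2'(3,4) V1(1) n21] .
  ultimately show False using inside_asym by blast
qed

end

theorem theorem3p8:
  fixes V :: "'a set" and E :: "'a \<Rightarrow> 'a \<Rightarrow> bool"
  assumes "ge2_subdivision_K4 V E"
  shows "\<not> restricted_frame_graph V E"
proof
  assume r: "restricted_frame_graph V E"
  from assms obtain b :: "nat \<Rightarrow> 'a" where "\<exists>P. inj_on b {0..<4} \<and>
       (\<forall>i j. i < j \<and> j < 4 \<longrightarrow>
          distinct (P i j) \<and> length (P i j) \<ge> 4 \<and>
          hd (P i j) = b i \<and> last (P i j) = b j \<and>
          set (inner (P i j)) \<inter> b ` {0..<4} = {}) \<and>
       (\<forall>i j k l. i < j \<and> j < 4 \<and> k < l \<and> l < 4 \<and> (i, j) \<noteq> (k, l) \<longrightarrow>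
          set (inner (P i j)) \<inter> set (inner (P k l)) = {}) \<and>
       V = (\<Union>i\<in>{0..<4}. \<Union>j\<in>{i<..<4}. set (P i j)) \<and>
       (\<forall>u v. E u v \<longleftrightarrow>
          (\<exists>i j n. i < j \<and> j < 4 \<and> Suc n < length (P i j) \<and>
             ((u = P i j ! n \<and> v = P i j ! Suc n) \<or> (v = P i j ! n \<and> u = P i j ! Suc n))))"
    unfolding ge2_subdivision_K4_def ..
  then obtain P :: "nat \<Rightarrow> nat \<Rightarrow> 'a list" where bP: "inj_on b {0..<4} \<and>
       (\<forall>i j. i < j \<and> j < 4 \<longrightarrow>
          distinct (P i j) \<and> length (P i j) \<ge> 4 \<and>
          hd (P i j) = b i \<and> last (P i j) = b j \<and>
          set (inner (P i j)) \<inter> b ` {0..<4} = {}) \<and>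
       (\<forall>i j k l. i < j \<and> j < 4 \<and> k < l \<and> l < 4 \<and> (i, j) \<noteq> (k, l) \<longrightarrow>
          set (inner (P i j)) \<inter> set (inner (P k l)) = {}) \<and>
       V = (\<Union>i\<in>{0..<4}. \<Union>j\<in>{i<..<4}. set (P i j)) \<and>
       (\<forall>u v. E u v \<longleftrightarrow>
          (\<exists>i j n. i < j \<and> j < 4 \<and> Suc n < length (P i j) \<and>
             ((u = P i j ! n \<and> v = P i j ! Suc n) \<or> (v = P i j ! n \<and> u = P i j ! Suc n))))" ..
  note b1 = conjunct1[OF bP]
  note b2 = conjunct1[OF conjunct2[OF bP]]
  note b3 = conjunct1[OF conjunct2[OF conjunct2[OF bP]]]
  note b4 = conjunct1[OF conjunct2[OF conjunct2[OF conjunct2[OF bP]]]]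
  note b5 = conjunct2[OF conjunct2[OF conjunct2[OF conjunct2[OF bP]]]]
  from r obtain F :: "'a \<Rightarrow> box" where "(\<forall>v\<in>V. valid_box (F v)) \<and>
       (\<forall>u\<in>V. \<forall>v\<in>V. u \<noteq> v \<longrightarrow> (E u v \<longleftrightarrow> frame (F u) \<inter> frame (F v) \<noteq> {})) \<and>
       (\<forall>u\<in>V. \<forall>v\<in>V. u \<noteq> v \<longrightarrow> corners (F u) \<inter> frame (F v) = {}) \<and>
       (\<forall>u\<in>V. \<forall>v\<in>V. u \<noteq> v \<longrightarrow> left_side (F u) \<inter> frame (F v) = {}) \<and>
       (\<forall>u\<in>V. \<forall>v\<in>V. u \<noteq> v \<longrightarrow> right_side (F u) \<inter> frame (F v) \<noteq> {} \<longrightarrow>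
           right_side (F u) \<inter> top_side (F v) \<noteq> {} \<and>
           right_side (F u) \<inter> bottom_side (F v) \<noteq> {}) \<and>
       (\<forall>u\<in>V. \<forall>v\<in>V. u \<noteq> v \<longrightarrow> frame (F u) \<inter> frame (F v) \<noteq> {} \<longrightarrow>
           (\<forall>w\<in>V. \<not> frame (F w) \<subseteq> region (F u) \<inter> region (F v)))"
    unfolding restricted_frame_graph_def ..
  note F = this
  note f1 = conjunct1[OF F]
  note f2 = conjunct1[OF conjunct2[OF F]]
  note f3 = conjunct1[OF conjunct2[OF conjunct2[OF F]]]
  note f4 = conjunct1[OF conjunct2[OF conjunct2[OF conjunct2[OF F]]]]
  note f5 = conjunct1[OF conjunct2[OF conjunct2[OF conjunct2[OF conjunct2[OF F]]]]]
  interpret Rep V E b P F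
    apply unfold_locales
    subgoal by (fact b1)
    subgoal for i j using b2[rule_format, of i j] by blast
    subgoal for i j k l using b3[rule_format, of i j k l] by blast
    subgoal by (fact b4)
    subgoal by (rule b5[rule_format])
    subgoal by (fact f1)
    subgoal by (fact f2)
    subgoal by (fact f3)
    subgoal by (fact f4)
    subgoal by (fact f5)
    done
  show False by (rule contradiction)
qed

end
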